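(* Let $B$ be a unital commutative semi-simple Banach algebra with connected maximal ideal space $X$. Let $T$ be a unital endomorphism of $B$ which is a Riesz operator, induced by a selfmap $\phi$ of $X$, and suppose $\{x_0\}=\bigcap_{n=0}^\infty\phi_n(X)$. If $B$ has no non-zero point derivations at $x_0$, then there is a positive integer $N$ such that $T^Nf=\hat f(x_0)1$ for all $f\in B$.
   Context: The maximal ideal space $X$ of $B$ carries the weak-* (Gelfand) topology, and $\hat f$ denotes the Gelfand transform of $f\in B$. A unital endomorphism $T$ of $B$ is induced by a weak-* continuous selfmap $\phi$ of $X$ if $\widehat{Tf}(x)=\hat f(\phi(x))$ for all $f\in B$, $x\in X$; $\phi_n$ is the $n$-th iterate of $\phi$ ($\phi_0$ the identity). A point derivation at $x_0$ is a linear functional $D$ on $B$ with $D(fg)=\hat f(x_0)D(g)+\hat g(x_0)D(f)$. A bounded operator $T$ is a Riesz operator if $\lim_{n}\left[\inf\{\|T^n-K\|:K \text{ compact}\}\right]^{1/n}=0$. *)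

theory Defs
  imports "HOL-Analysis.Analysis"
begin

text \<open>A unital commutative complex Banach algebra is encoded as a type of class
  comm_ring_1, real_normed_algebra_1, banach together with a unital ring embedding
  iota of the complex scalars, compatible with the real structure and the norm;
  complex scalar multiplication c.x is iota c * x.\<close>

definition cplx_banach_alg :: "(complex \<Rightarrow> 'a::{comm_ring_1,real_normed_algebra_1,banach}) \<Rightarrow> bool" where
  "cplx_banach_alg \<iota> \<longleftrightarrow>
     (\<forall>c d. \<iota> (c + d) = \<iota> c + \<iota> d) \<and> (\<forall>c d. \<iota> (c * d) = \<iota> c * \<iota> d) \<and> \<iota> 1 = 1 \<and>
     (\<forall>r. \<iota> (complex_of_real r) = of_real r) \<and>
     (\<forall>c x. norm (\<iota> c * x) = cmod c * norm x)"

definition clinear_map :: "(complex \<Rightarrow> 'a::{comm_ring_1,real_normed_algebra_1,banach}) \<Rightarrow> ('a \<Rightarrow> 'a) \<Rightarrow> bool" where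
  "clinear_map \<iota> T \<longleftrightarrow> (\<forall>x y. T (x + y) = T x + T y) \<and> (\<forall>c x. T (\<iota> c * x) = \<iota> c * T x)"

definition clinear_functional :: "(complex \<Rightarrow> 'a::{comm_ring_1,real_normed_algebra_1,banach}) \<Rightarrow> ('a \<Rightarrow> complex) \<Rightarrow> bool" where
  "clinear_functional \<iota> D \<longleftrightarrow> (\<forall>x y. D (x + y) = D x + D y) \<and> (\<forall>c x. D (\<iota> c * x) = c * D x)"

text \<open>Maximal ideal space: nonzero multiplicative linear functionals (characters).
  It is a subset of the function type 'a => complex, whose topology (Function_Topology)
  is the product topology, i.e. pointwise convergence; the subspace topology is the
  weak-* (Gelfand) topology. The Gelfand transform of f is (\<lambda>h. h f).\<close>

definition max_ideal_space :: "(complex \<Rightarrow> 'a::{comm_ring_1,real_normed_algebra_1,banach}) \<Rightarrow> ('a \<Rightarrow> complex) set" where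
  "max_ideal_space \<iota> = {h. clinear_functional \<iota> h \<and> (\<forall>x y. h (x * y) = h x * h y) \<and> h \<noteq> (\<lambda>_. 0)}"

definition semisimple :: "(complex \<Rightarrow> 'a::{comm_ring_1,real_normed_algebra_1,banach}) \<Rightarrow> bool" where
  "semisimple \<iota> \<longleftrightarrow> (\<forall>f. (\<forall>h\<in>max_ideal_space \<iota>. h f = 0) \<longrightarrow> f = 0)"

definition unital_endomorphism :: "(complex \<Rightarrow> 'a::{comm_ring_1,real_normed_algebra_1,banach}) \<Rightarrow> ('a \<Rightarrow> 'a) \<Rightarrow> bool" where
  "unital_endomorphism \<iota> T \<longleftrightarrow> clinear_map \<iota> T \<and> (\<forall>x y. T (x * y) = T x * T y) \<and> T 1 = 1"

definition induced_by :: "(complex \<Rightarrow> 'a::{comm_ring_1,real_normed_algebra_1,banach}) \<Rightarrow> ('a \<Rightarrow> 'a) \<Rightarrow> (('a \<Rightarrow> complex) \<Rightarrow> ('a \<Rightarrow> complex)) \<Rightarrow> bool" where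
  "induced_by \<iota> T \<phi> \<longleftrightarrow>
     \<phi> ` max_ideal_space \<iota> \<subseteq> max_ideal_space \<iota> \<and> continuous_on (max_ideal_space \<iota>) \<phi> \<and>
     (\<forall>f. \<forall>x\<in>max_ideal_space \<iota>. x (T f) = (\<phi> x) f)"

definition point_derivation :: "(complex \<Rightarrow> 'a::{comm_ring_1,real_normed_algebra_1,banach}) \<Rightarrow> ('a \<Rightarrow> complex) \<Rightarrow> ('a \<Rightarrow> complex) \<Rightarrow> bool" where
  "point_derivation \<iota> x0 D \<longleftrightarrow> clinear_functional \<iota> D \<and> (\<forall>f g. D (f * g) = x0 f * D g + x0 g * D f)"

definition compact_operator :: "(complex \<Rightarrow> 'a::{comm_ring_1,real_normed_algebra_1,banach}) \<Rightarrow> ('a \<Rightarrow> 'a) \<Rightarrow> bool" where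
  "compact_operator \<iota> K \<longleftrightarrow> clinear_map \<iota> K \<and> bounded_linear K \<and> compact (closure (K ` ball 0 1))"

definition riesz_operator :: "(complex \<Rightarrow> 'a::{comm_ring_1,real_normed_algebra_1,banach}) \<Rightarrow> ('a \<Rightarrow> 'a) \<Rightarrow> bool" where
  "riesz_operator \<iota> T \<longleftrightarrow> clinear_map \<iota> T \<and> bounded_linear T \<and>
     (\<lambda>n. root n (Inf {onorm (\<lambda>x. (T ^^ n) x - K x) | K. compact_operator \<iota> K})) \<longlonglongrightarrow> 0"

end

theory Submission
  imports Defs
begin

section \<open>Basic facts about the scalar embedding and characters\<close>

context
  fixes \<iota> :: "complex \<Rightarrow> 'a::{comm_ring_1,real_normed_algebra_1,banach}"
  assumes cba: "cplx_banach_alg \<iota>"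
begin

lemma iota_add: "\<iota> (c + d) = \<iota> c + \<iota> d" using cba by (simp add: cplx_banach_alg_def)
lemma iota_mult: "\<iota> (c * d) = \<iota> c * \<iota> d" using cba by (simp add: cplx_banach_alg_def)
lemma iota_one: "\<iota> 1 = 1" using cba by (simp add: cplx_banach_alg_def)
lemma iota_real: "\<iota> (complex_of_real r) = of_real r" using cba by (simp add: cplx_banach_alg_def)
lemma iota_norm: "norm (\<iota> c * x) = cmod c * norm x" using cba by (simp add: cplx_banach_alg_def)

lemma iota_zero: "\<iota> 0 = 0"
  using iota_add[of 0 0] by simp

lemma iota_uminus: "\<iota> (- c) = - \<iota> c"
  using iota_add[of "-c" c] iota_zero by (simp add: eq_neg_iff_add_eq_0)

lemma iota_diff: "\<iota> (c - d) = \<iota> c - \<iota> d"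
  using iota_add[of c "-d"] iota_uminus[of d] by simp

lemma neumann:
  fixes u :: 'a
  assumes "norm u < 1"
  shows "(1 - u) * (\<Sum>n. u ^ n) = 1"
proof -
  have s: "summable (\<lambda>n. u ^ n)" by (rule complete_algebra_summable_geometric[OF assms])
  have "u * (\<Sum>n. u ^ n) = (\<Sum>n. u * u ^ n)" using suminf_mult[OF s, of u] by simp
  also have "\<dots> = (\<Sum>n. u ^ Suc n)" by simp
  also have "\<dots> = (\<Sum>n. u ^ n) - 1" using suminf_split_head[OF s] by simp
  finally show ?thesis by (simp add: algebra_simps)
qed

context
  fixes y :: "'a \<Rightarrow> complex"
  assumes yX: "y \<in> max_ideal_space \<iota>"
begin

lemma char_add: "y (a + b) = y a + y b"
  using yX unfolding max_ideal_space_def clinear_functional_def by blast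
lemma char_scale: "y (\<iota> c * a) = c * y a"
  using yX unfolding max_ideal_space_def clinear_functional_def by blast
lemma char_mult: "y (a * b) = y a * y b"
  using yX unfolding max_ideal_space_def by blast
lemma char_zero: "y 0 = 0"
  using char_add[of 0 0] by simp
lemma char_uminus: "y (- a) = - y a"
  using char_add[of "-a" a] char_zero by (simp add: eq_neg_iff_add_eq_0)
lemma char_diff: "y (a - b) = y a - y b"
  using char_add[of a "-b"] char_uminus[of b] by simp

lemma char_one: "y 1 = 1"
proof -
  obtain x where x: "y x \<noteq> 0" using yX by (auto simp: max_ideal_space_def fun_eq_iff)
  have "y x = y x * y 1" using char_mult[of x 1] by simp
  with x show ?thesis by simp
qed

lemma char_iota: "y (\<iota> c) = c"
  using char_scale[of c 1] char_one by simp

lemma char_scaleR: "y (r *\<^sub>R a) = r *\<^sub>R y a"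
proof -
  have "r *\<^sub>R a = \<iota> (complex_of_real r) * a" by (simp add: iota_real scaleR_conv_of_real)
  then show ?thesis using char_scale by (simp add: scaleR_conv_of_real)
qed

lemma char_bound: "cmod (y f) \<le> norm f"
proof (rule ccontr)
  assume "\<not> cmod (y f) \<le> norm f"
  then have lt: "norm f < cmod (y f)" by simp
  then have ne: "y f \<noteq> 0" by auto
  define u where "u = \<iota> (1 / y f) * f"
  have "norm u = norm f / cmod (y f)" by (simp add: u_def iota_norm norm_divide)
  then have nu: "norm u < 1" using lt by (simp add: divide_less_eq)
  have yu: "y u = 1" using ne by (simp add: u_def char_scale)
  have "y ((1 - u) * (\<Sum>n. u ^ n)) = y 1" using neumann[OF nu] by simp
  then show False using yu by (simp add: char_mult char_diff char_one)
qed

lemma char_bounded_linear: "bounded_linear y"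
  by (rule bounded_linear_intro[of _ 1]) (auto simp: char_add char_scaleR char_bound)

end

end


section \<open>Uniform boundedness principle\<close>

lemma ubp:
  fixes F :: "'i \<Rightarrow> 'a::banach \<Rightarrow> 'b::real_normed_vector"
  assumes bl: "\<And>i. i \<in> I \<Longrightarrow> bounded_linear (F i)"
    and pw: "\<And>x. \<exists>C. \<forall>i\<in>I. norm (F i x) \<le> C"
  shows "\<exists>K. \<forall>i\<in>I. \<forall>x. norm (F i x) \<le> K * norm x"
proof -
  define G where "G n = {x. \<forall>i\<in>I. norm (F i x) \<le> real n}" for n :: nat
  have cl: "closed (G n)" for n
  proof -
    have "G n = (\<Inter>i\<in>I. {x. norm (F i x) \<le> real n})" by (auto simp: G_def)
    moreover have "closed {x. norm (F i x) \<le> real n}" if "i \<in> I" for i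
    proof (rule closed_Collect_le)
      show "continuous_on UNIV (\<lambda>x. norm (F i x))"
        using bl[OF that] by (intro continuous_on_norm linear_continuous_on)
    qed simp
    ultimately show ?thesis by auto
  qed
  have un: "(\<Union>(range G)) = UNIV"
  proof safe
    fix x :: 'a
    obtain C where C: "\<forall>i\<in>I. norm (F i x) \<le> C" using pw by blast
    obtain n :: nat where "C \<le> real n" using real_arch_simple by blast
    then have "x \<in> G n" using C by (auto simp: G_def)
    then show "x \<in> \<Union>(range G)" by blast
  qed simp
  have "\<exists>n. euclidean interior_of G n \<noteq> {}"
  proof (rule ccontr)
    assume "\<not> (\<exists>n. euclidean interior_of G n \<noteq> {})"
    then have "euclidean interior_of \<Union>(range G) = {}"
      by (intro Baire_category_alt)
        (auto simp: completely_metrizable_space_euclidean closed_closedin[symmetric] cl)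
    then show False using un by simp
  qed
  then obtain n a where "a \<in> euclidean interior_of G n" by blast
  then have "\<exists>T. openin euclidean T \<and> a \<in> T \<and> T \<subseteq> G n"
    unfolding interior_of_def by blast
  then obtain U where U: "openin euclidean U" "a \<in> U" "U \<subseteq> G n" by blast
  then have "open U" using open_openin by blast
  then obtain r where r: "r > 0" "ball a r \<subseteq> G n" using U by (meson open_contains_ball order_trans)
  have aG: "a \<in> G n" using r by auto
  show ?thesis
  proof (intro exI[of _ "4 * real n / r"] ballI allI)
    fix i x assume i: "i \<in> I"
    interpret L: bounded_linear "F i" by (rule bl[OF i])
    show "norm (F i x) \<le> 4 * real n / r * norm x"
    proof (cases "x = 0")
      case True then show ?thesis by (simp add: L.zero)
    next
      case False
      then have nx: "norm x > 0" by simp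
      define z where "z = a + (r / (2 * norm x)) *\<^sub>R x"
      have za: "z - a = (r / (2 * norm x)) *\<^sub>R x" by (simp add: z_def)
      have "dist a z = norm (z - a)" by (simp add: dist_norm norm_minus_commute)
      also have "\<dots> = (r / (2 * norm x)) * norm x" using r by (simp add: za)
      also have "\<dots> = r / 2" using nx by simp
      finally have "dist a z = r / 2" .
      then have "z \<in> ball a r" using r by simp
      then have zG: "z \<in> G n" using r by auto
      have c1: "(2 * norm x / r) * (r / (2 * norm x)) = 1" using nx r by simp
      have "(2 * norm x / r) *\<^sub>R (z - a) = ((2 * norm x / r) * (r / (2 * norm x))) *\<^sub>R x"
        by (simp only: za scaleR_scaleR)
      then have "x = (2 * norm x / r) *\<^sub>R (z - a)" by (simp only: c1 scaleR_one)
      then have "F i x = (2 * norm x / r) *\<^sub>R (F i z - F i a)"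
        by (metis L.diff L.scale)
      then have "norm (F i x) = (2 * norm x / r) * norm (F i z - F i a)"
        using nx r by simp
      also have "\<dots> \<le> (2 * norm x / r) * (real n + real n)"
      proof (rule mult_left_mono)
        have "norm (F i z) \<le> real n" "norm (F i a) \<le> real n" using zG aG i by (auto simp: G_def)
        then show "norm (F i z - F i a) \<le> real n + real n"
          by (meson add_mono norm_triangle_ineq4 order_trans)
      qed (use nx r in simp)
      also have "\<dots> = 4 * real n / r * norm x" by (simp add: field_simps)
      finally show ?thesis .
    qed
  qed
qed


section \<open>No point derivations: the maximal ideal is spanned by products\<close>

lemma product_bound:
  fixes \<iota> :: "complex \<Rightarrow> 'a::{comm_ring_1,real_normed_algebra_1,banach}"
  assumes cba: "cplx_banach_alg \<iota>"
    and x0X: "x0 \<in> max_ideal_space \<iota>"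
    and noder: "\<forall>D. point_derivation \<iota> x0 D \<longrightarrow> D = (\<lambda>_. 0)"
    and f0: "x0 f = 0"
  shows "\<exists>C. \<forall>y\<in>max_ideal_space \<iota>. cmod (y f) \<le> C * (onorm (\<lambda>g. y g - x0 g))\<^sup>2"
proof -
  interpret V: vector_space "\<lambda>c (x::'a). \<iota> c * x"
    by unfold_locales (simp_all add: iota_add[OF cba] iota_mult[OF cba] iota_one[OF cba]
        distrib_left distrib_right mult.assoc)
  interpret Cv: vector_space "(*) :: complex \<Rightarrow> complex \<Rightarrow> complex"
    by unfold_locales (simp_all add: algebra_simps)
  interpret P: vector_space_pair "\<lambda>c (x::'a). \<iota> c * x" "(*) :: complex \<Rightarrow> complex \<Rightarrow> complex" ..
  define S where "S = {g * h | g h. x0 g = 0 \<and> x0 h = 0}"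
  note x0add = char_add[OF cba x0X] and x0scale = char_scale[OF cba x0X]
    and x0mult = char_mult[OF cba x0X] and x0diff = char_diff[OF cba x0X]
    and x0iota = char_iota[OF cba x0X]
  have inW: "f \<in> V.span S"
  proof (rule ccontr)
    assume nf: "f \<notin> V.span S"
    obtain B where B: "B \<subseteq> V.span S" "V.independent B" "V.span S \<subseteq> V.span B"
      by (rule V.maximal_independent_subset)
    have "V.span B \<subseteq> V.span S" using B(1) by (simp add: V.span_minimal)
    then have nfB: "f \<notin> V.span B" using nf by blast
    have ind: "V.independent (insert f B)" by (rule V.independent_insertI[OF nfB B(2)])
    obtain l where l: "Vector_Spaces.linear (\<lambda>c (x::'a). \<iota> c * x) (*) l"
        "\<forall>x\<in>insert f B. l x = (if x = f then 1 else 0)"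
      using P.linear_independent_extend[OF ind, of "\<lambda>x. if x = f then 1 else 0"] by blast
    have ladd: "l (a + b) = l a + l b" for a b using l(1) by (simp add: Vector_Spaces.linear_iff)
    have lscale: "l (\<iota> c * a) = c * l a" for c a using l(1) by (simp add: Vector_Spaces.linear_iff)
    have lzero: "l 0 = 0" using ladd[of 0 0] by simp
    have lminus: "l (- a) = - l a" for a using ladd[of "-a" a] lzero by (simp add: eq_neg_iff_add_eq_0)
    have ldiff: "l (a - b) = l a - l b" for a b using ladd[of a "-b"] lminus[of b] by simp
    have lf: "l f = 1" using l(2) by simp
    have lB: "l x = 0" if "x \<in> V.span B" for x
      using that
    proof (induction rule: V.span_induct_alt)
      case base then show ?case by (rule lzero)
    next
      case (step c x y)
      have "x \<noteq> f" using step(1) nfB V.span_base by blast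
      then have "l x = 0" using l(2) step(1) by simp
      then show ?case using step(2) by (simp add: ladd lscale)
    qed
    have lS: "l (g * h) = 0" if "x0 g = 0" "x0 h = 0" for g h
    proof -
      have "g * h \<in> S" using that by (auto simp: S_def)
      then have "g * h \<in> V.span B" using B(3) V.span_base by blast
      then show ?thesis by (rule lB)
    qed
    define D where "D g = l (g - \<iota> (x0 g))" for g
    have "point_derivation \<iota> x0 D"
      unfolding point_derivation_def clinear_functional_def
    proof (intro conjI allI)
      fix x y :: 'a
      have eq: "x + y - \<iota> (x0 (x + y)) = (x - \<iota> (x0 x)) + (y - \<iota> (x0 y))"
        by (simp add: x0add iota_add[OF cba])
      show "D (x + y) = D x + D y" unfolding D_def eq by (rule ladd)
    next
      fix c and x :: 'a
      have eq: "\<iota> c * x - \<iota> (x0 (\<iota> c * x)) = \<iota> c * (x - \<iota> (x0 x))"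
        by (simp add: x0scale iota_mult[OF cba] right_diff_distrib)
      show "D (\<iota> c * x) = c * D x" unfolding D_def eq by (rule lscale)
    next
      fix g h :: 'a
      define a where "a = \<iota> (x0 g)"
      define b where "b = \<iota> (x0 h)"
      define m where "m = g - a"
      define n where "n = h - b"
      have m0: "x0 m = 0" by (simp add: m_def a_def x0diff x0iota)
      have n0: "x0 n = 0" by (simp add: n_def b_def x0diff x0iota)
      have "g * h - \<iota> (x0 (g * h)) = g * h - a * b"
        by (simp add: a_def b_def x0mult iota_mult[OF cba])
      also have "\<dots> = a * n + b * m + m * n" by (simp add: m_def n_def algebra_simps)
      finally have e: "g * h - \<iota> (x0 (g * h)) = a * n + b * m + m * n" .
      have "D (g * h) = l (a * n) + l (b * m) + l (m * n)" by (simp add: D_def e ladd)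
      also have "\<dots> = x0 g * D h + x0 h * D g"
      proof -
        have lmn: "l (m * n) = 0" by (rule lS[OF m0 n0])
        have Dh: "D h = l n" by (simp add: D_def n_def b_def)
        have Dg: "D g = l m" by (simp add: D_def m_def a_def)
        show ?thesis by (simp add: a_def b_def lscale lmn Dh Dg)
      qed
      finally show "D (g * h) = x0 g * D h + x0 h * D g" .
    qed
    then have "D = (\<lambda>_. 0)" using noder by blast
    then have "D f = 0" by simp
    moreover have "D f = 1" using f0 lf by (simp add: D_def iota_zero[OF cba])
    ultimately show False by simp
  qed
  have ybd: "cmod (y g) \<le> onorm (\<lambda>g. y g - x0 g) * norm g"
    if "y \<in> max_ideal_space \<iota>" "x0 g = 0" for y g
  proof -
    have "bounded_linear (\<lambda>g. y g - x0 g)"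
      using char_bounded_linear[OF cba that(1)] char_bounded_linear[OF cba x0X]
      by (rule bounded_linear_sub)
    from onorm[OF this, of g] show ?thesis using that(2) by simp
  qed
  from inW show ?thesis
  proof (induction rule: V.span_induct_alt)
    case base
    show ?case by (intro exI[of _ 0] ballI) (simp add: char_zero[OF cba])
  next
    case (step c x w)
    obtain C where C: "\<forall>y\<in>max_ideal_space \<iota>. cmod (y w) \<le> C * (onorm (\<lambda>g. y g - x0 g))\<^sup>2"
      using step(2) by blast
    obtain g h where gh: "x = g * h" "x0 g = 0" "x0 h = 0" using step(1) by (auto simp: S_def)
    show ?case
    proof (intro exI[of _ "cmod c * norm g * norm h + C"] ballI)
      fix y assume yX: "y \<in> max_ideal_space \<iota>"
      define e where "e = onorm (\<lambda>g. y g - x0 g)"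
      have e0: "0 \<le> e" unfolding e_def
        using char_bounded_linear[OF cba yX] char_bounded_linear[OF cba x0X]
        by (intro onorm_pos_le bounded_linear_sub)
      have yg: "cmod (y g) \<le> e * norm g" using ybd[OF yX gh(2)] by (simp add: e_def)
      have yh: "cmod (y h) \<le> e * norm h" using ybd[OF yX gh(3)] by (simp add: e_def)
      have "y (\<iota> c * x + w) = c * (y g * y h) + y w"
        by (simp add: gh(1) char_add[OF cba yX] char_iota[OF cba yX] char_mult[OF cba yX])
      then have "cmod (y (\<iota> c * x + w)) \<le> cmod c * (cmod (y g) * cmod (y h)) + cmod (y w)"
        by (metis norm_mult norm_triangle_ineq)
      also have "\<dots> \<le> cmod c * ((e * norm g) * (e * norm h)) + C * e\<^sup>2"
      proof -
        have Cy: "cmod (y w) \<le> C * e\<^sup>2" using C yX by (simp add: e_def)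
        show ?thesis using Cy yg yh e0 by (intro add_mono mult_left_mono mult_mono) auto
      qed
      also have "\<dots> = (cmod c * norm g * norm h + C) * e\<^sup>2"
        by (simp add: power2_eq_square algebra_simps)
      finally show "cmod (y (\<iota> c * x + w)) \<le> (cmod c * norm g * norm h + C) * (onorm (\<lambda>g. y g - x0 g))\<^sup>2"
        by (simp add: e_def)
    qed
  qed
qed


section \<open>Dichotomy for the distance of characters to x0\<close>

lemma dichotomy:
  fixes \<iota> :: "complex \<Rightarrow> 'a::{comm_ring_1,real_normed_algebra_1,banach}"
  assumes cba: "cplx_banach_alg \<iota>"
    and x0X: "x0 \<in> max_ideal_space \<iota>"
    and noder: "\<forall>D. point_derivation \<iota> x0 D \<longrightarrow> D = (\<lambda>_. 0)"
  shows "\<exists>K>0. \<forall>y\<in>max_ideal_space \<iota>.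
           onorm (\<lambda>g. y g - x0 g) \<le> K * (onorm (\<lambda>g. y g - x0 g))\<^sup>2"
proof -
  define e where "e y = onorm (\<lambda>g. y g - x0 g)" for y :: "'a \<Rightarrow> complex"
  define I where "I = {y \<in> max_ideal_space \<iota>. e y \<noteq> 0}"
  define F where "F y = (\<lambda>f. (1 / (e y)\<^sup>2) *\<^sub>R (y f - x0 f))" for y :: "'a \<Rightarrow> complex"
  have blL: "bounded_linear (\<lambda>g. y g - x0 g)" if "y \<in> max_ideal_space \<iota>" for y
    using char_bounded_linear[OF cba that] char_bounded_linear[OF cba x0X]
    by (rule bounded_linear_sub)
  have Pf: "y f - x0 f = y (f - \<iota> (x0 f))" if "y \<in> max_ideal_space \<iota>" for y f
    by (simp add: char_diff[OF cba that] char_iota[OF cba that])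
  have "\<exists>K. \<forall>y\<in>I. \<forall>x. norm (F y x) \<le> K * norm x"
  proof (rule ubp)
    fix y assume "y \<in> I"
    then show "bounded_linear (F y)" unfolding F_def I_def
      using blL by (auto intro: bounded_linear_const_scaleR)
  next
    fix f :: 'a
    have "x0 (f - \<iota> (x0 f)) = 0" using Pf[OF x0X, of f] by simp
    from product_bound[OF cba x0X noder this]
    obtain C where C: "\<forall>y\<in>max_ideal_space \<iota>. cmod (y (f - \<iota> (x0 f))) \<le> C * (e y)\<^sup>2"
      by (auto simp: e_def)
    show "\<exists>C. \<forall>y\<in>I. norm (F y f) \<le> C"
    proof (intro exI[of _ C] ballI)
      fix y assume yI: "y \<in> I"
      then have yX: "y \<in> max_ideal_space \<iota>" and ey: "e y \<noteq> 0" by (auto simp: I_def)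
      have "norm (F y f) = cmod (y (f - \<iota> (x0 f))) / (e y)\<^sup>2"
        by (simp add: F_def Pf[OF yX] divide_inverse mult.commute)
      also have "\<dots> \<le> C * (e y)\<^sup>2 / (e y)\<^sup>2"
        using C yX by (intro divide_right_mono) auto
      also have "\<dots> = C" using ey by simp
      finally show "norm (F y f) \<le> C" .
    qed
  qed
  then obtain K where K: "\<forall>y\<in>I. \<forall>x. norm (F y x) \<le> K * norm x" by blast
  show ?thesis
  proof (intro exI[of _ "max K 1"] conjI ballI)
    fix y assume yX: "y \<in> max_ideal_space \<iota>"
    show "onorm (\<lambda>g. y g - x0 g) \<le> max K 1 * (onorm (\<lambda>g. y g - x0 g))\<^sup>2"
    proof (cases "e y = 0")
      case True then show ?thesis by (simp add: e_def)
    next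
      case False
      then have yI: "y \<in> I" using yX by (simp add: I_def)
      have ep: "e y > 0" using False onorm_pos_le[OF blL[OF yX]] by (simp add: e_def)
      have "onorm (\<lambda>g. y g - x0 g) \<le> K * (e y)\<^sup>2"
      proof (rule onorm_le)
        fix x
        have "norm (F y x) \<le> K * norm x" using K yI by blast
        then have "norm (y x - x0 x) / (e y)\<^sup>2 \<le> K * norm x"
          by (simp add: F_def divide_inverse mult.commute)
        then have "norm (y x - x0 x) \<le> K * norm x * (e y)\<^sup>2"
          using ep by (simp add: divide_le_eq)
        then show "norm (y x - x0 x) \<le> K * (e y)\<^sup>2 * norm x" by (simp add: mult_ac)
      qed
      then have "e y \<le> K * (e y)\<^sup>2" by (simp only: e_def)
      also have "\<dots> \<le> max K 1 * (e y)\<^sup>2" by (intro mult_right_mono) auto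
      finally show ?thesis by (simp add: e_def)
    qed
  qed simp
qed


section \<open>Topology of the maximal ideal space\<close>

lemma fun_compact_imp_closed:
  fixes S :: "('a \<Rightarrow> complex) set"
  assumes "compact S"
  shows "closed S"
proof -
  have "Hausdorff_space (product_topology (\<lambda>_::'a. euclidean :: complex topology) UNIV)"
    by (metis Hausdorff_space_product_topology Hausdorff_space_euclidean)
  then have H: "Hausdorff_space (euclidean :: ('a \<Rightarrow> complex) topology)"
    by (metis euclidean_product_topology)
  have "compactin euclidean S" using assms by simp
  then have "closedin euclidean S" by (rule compactin_imp_closedin[OF H])
  then show ?thesis using closed_closedin by blast
qed

lemma X_compact:
  fixes \<iota> :: "complex \<Rightarrow> 'a::{comm_ring_1,real_normed_algebra_1,banach}"
  assumes cba: "cplx_banach_alg \<iota>"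
  shows "compact (max_ideal_space \<iota>)"
proof -
  define P :: "('a \<Rightarrow> complex) set" where "P = PiE UNIV (\<lambda>f. cball 0 (norm f))"
  define Cl :: "('a \<Rightarrow> complex) set" where "Cl = {h. (\<forall>x y. h (x + y) = h x + h y) \<and>
      (\<forall>c x. h (\<iota> c * x) = c * h x) \<and> (\<forall>x y. h (x * y) = h x * h y) \<and> h 1 = 1}"
  have "compactin (product_topology (\<lambda>_. euclidean) UNIV) P"
    unfolding P_def compactin_PiE by (intro disjI2 ballI) (simp only: compactin_euclidean_iff compact_cball)
  then have cP: "compact P" by (metis euclidean_product_topology compactin_euclidean_iff)
  have ev: "continuous_on UNIV (\<lambda>h::'a \<Rightarrow> complex. h x)" for x
    by simp
  have c1: "closed {h::'a \<Rightarrow> complex. h (x + y) = h x + h y}" for x y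
    by (rule closed_Collect_eq) (simp_all add: continuous_on_add)
  have c2: "closed {h::'a \<Rightarrow> complex. h (\<iota> c * x) = c * h x}" for c x
    by (rule closed_Collect_eq) (simp_all add: continuous_on_mult)
  have c3: "closed {h::'a \<Rightarrow> complex. h (x * y) = h x * h y}" for x y
    by (rule closed_Collect_eq) (simp_all add: continuous_on_mult)
  have c4: "closed {h::'a \<Rightarrow> complex. h 1 = 1}"
    by (rule closed_Collect_eq) simp_all
  have cC: "closed Cl" unfolding Cl_def
    apply (rule closed_Collect_conj, rule closed_Collect_all, rule closed_Collect_all, rule c1)
    apply (rule closed_Collect_conj, rule closed_Collect_all, rule closed_Collect_all, rule c2)
    apply (rule closed_Collect_conj, rule closed_Collect_all, rule closed_Collect_all, rule c3)
    by (rule c4)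
  have eqX: "max_ideal_space \<iota> = P \<inter> Cl"
  proof (intro equalityI subsetI)
    fix y assume yX: "y \<in> max_ideal_space \<iota>"
    have "y \<in> P" by (simp add: P_def PiE_iff char_bound[OF cba yX])
    moreover have "y \<in> Cl"
      unfolding Cl_def using char_add[OF cba yX] char_scale[OF cba yX] char_mult[OF cba yX]
          char_one[OF cba yX] by blast
    ultimately show "y \<in> P \<inter> Cl" by blast
  next
    fix y assume "y \<in> P \<inter> Cl"
    then have "y \<in> Cl" by blast
    then have y: "\<forall>x z. y (x + z) = y x + y z" "\<forall>c x. y (\<iota> c * x) = c * y x"
      "\<forall>x z. y (x * z) = y x * y z" "y 1 = 1" unfolding Cl_def by blast+
    have "y \<noteq> (\<lambda>_. 0)"
    proof
      assume "y = (\<lambda>_. 0)"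
      then have "y 1 = 0" by simp
      then show False using y(4) by simp
    qed
    then show "y \<in> max_ideal_space \<iota>"
      unfolding max_ideal_space_def clinear_functional_def using y by blast
  qed
  show ?thesis unfolding eqX by (rule compact_Int_closed[OF cP cC])
qed


section \<open>Dynamics of the induced map\<close>

context
  fixes \<iota> :: "complex \<Rightarrow> 'a::{comm_ring_1,real_normed_algebra_1,banach}"
    and T :: "'a \<Rightarrow> 'a"
    and \<phi> :: "('a \<Rightarrow> complex) \<Rightarrow> ('a \<Rightarrow> complex)"
    and x0 :: "'a \<Rightarrow> complex"
  assumes cba: "cplx_banach_alg \<iota>"
    and ind: "induced_by \<iota> T \<phi>"
    and inter: "(\<Inter>n. (\<phi> ^^ n) ` max_ideal_space \<iota>) = {x0}"
begin

lemma phi_maps: "x \<in> max_ideal_space \<iota> \<Longrightarrow> \<phi> x \<in> max_ideal_space \<iota>"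
  using ind by (auto simp: induced_by_def)

lemma phi_cont: "continuous_on (max_ideal_space \<iota>) \<phi>"
  using ind by (auto simp: induced_by_def)

lemma phi_T: "x \<in> max_ideal_space \<iota> \<Longrightarrow> x (T f) = \<phi> x f"
  using ind by (auto simp: induced_by_def)

lemma it_maps: "x \<in> max_ideal_space \<iota> \<Longrightarrow> (\<phi> ^^ j) x \<in> max_ideal_space \<iota>"
  by (induction j) (auto intro: phi_maps)

lemma it_T: "x \<in> max_ideal_space \<iota> \<Longrightarrow> x ((T ^^ j) f) = (\<phi> ^^ j) x f"
proof (induction j arbitrary: f)
  case 0 then show ?case by simp
next
  case (Suc j)
  have "x ((T ^^ Suc j) f) = x ((T ^^ j) (T f))" by (simp only: funpow_Suc_right o_apply)
  also have "\<dots> = (\<phi> ^^ j) x (T f)" using Suc by simp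
  also have "\<dots> = \<phi> ((\<phi> ^^ j) x) f" using phi_T it_maps[OF Suc.prems] by simp
  finally show ?case by simp
qed

lemma it_cont: "continuous_on (max_ideal_space \<iota>) (\<phi> ^^ j)"
proof (induction j)
  case 0 then show ?case by (simp add: continuous_on_id)
next
  case (Suc j)
  have "continuous_on ((\<phi> ^^ j) ` max_ideal_space \<iota>) \<phi>"
    using phi_cont by (rule continuous_on_subset) (auto intro: it_maps)
  then have "continuous_on (max_ideal_space \<iota>) (\<phi> \<circ> (\<phi> ^^ j))"
    by (rule continuous_on_compose[OF Suc])
  then show ?case by simp
qed

lemma x0X: "x0 \<in> max_ideal_space \<iota>"
proof -
  have "x0 \<in> (\<phi> ^^ 0) ` max_ideal_space \<iota>" using inter by blast
  then show ?thesis by simp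
qed

lemma it_dec: "m \<le> j \<Longrightarrow> (\<phi> ^^ j) ` max_ideal_space \<iota> \<subseteq> (\<phi> ^^ m) ` max_ideal_space \<iota>"
proof
  fix y assume "m \<le> j" "y \<in> (\<phi> ^^ j) ` max_ideal_space \<iota>"
  then obtain x where x: "x \<in> max_ideal_space \<iota>" "y = (\<phi> ^^ j) x" by blast
  have "(\<phi> ^^ j) x = (\<phi> ^^ m) ((\<phi> ^^ (j - m)) x)"
    using \<open>m \<le> j\<close> by (metis funpow_add le_add_diff_inverse o_apply)
  then show "y \<in> (\<phi> ^^ m) ` max_ideal_space \<iota>" using x it_maps by blast
qed

lemma phi_x0: "\<phi> x0 = x0"
proof -
  have "\<phi> x0 \<in> (\<phi> ^^ k) ` max_ideal_space \<iota>" for k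
  proof -
    have "x0 \<in> (\<phi> ^^ k) ` max_ideal_space \<iota>" using inter by blast
    then obtain z where z: "z \<in> max_ideal_space \<iota>" "x0 = (\<phi> ^^ k) z" by blast
    then have "\<phi> x0 = (\<phi> ^^ k) (\<phi> z)" by (simp add: funpow_swap1)
    then show ?thesis using z phi_maps by blast
  qed
  then have "\<phi> x0 \<in> (\<Inter>n. (\<phi> ^^ n) ` max_ideal_space \<iota>)" by blast
  then show ?thesis using inter by blast
qed

lemma it_x0: "(\<phi> ^^ j) x0 = x0"
  by (induction j) (simp_all add: phi_x0)

lemma nest:
  assumes eta: "\<eta> > 0"
  shows "\<exists>j0. \<forall>j\<ge>j0. \<forall>x\<in>max_ideal_space \<iota>. cmod ((\<phi> ^^ j) x h - x0 h) < \<eta>"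
proof (rule ccontr)
  assume neg: "\<not> ?thesis"
  define X where "X = max_ideal_space \<iota>"
  define A where "A j = (\<phi> ^^ j) ` X \<inter> {y. \<eta> \<le> cmod (y h - x0 h)}" for j
  have cX: "compact X" unfolding X_def by (rule X_compact[OF cba])
  have Ane: "A j \<noteq> {}" for j
  proof -
    have ex: "\<forall>j0. \<exists>j\<ge>j0. \<exists>x\<in>X. \<eta> \<le> cmod ((\<phi> ^^ j) x h - x0 h)"
      using neg unfolding X_def by (simp add: not_less)
    obtain j' x where j': "j' \<ge> j" "x \<in> X" "\<eta> \<le> cmod ((\<phi> ^^ j') x h - x0 h)"
      using ex by blast
    then have "(\<phi> ^^ j') x \<in> (\<phi> ^^ j) ` X" using it_dec[OF j'(1)] unfolding X_def by blast
    then show ?thesis using j' by (auto simp: A_def)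
  qed
  have Adec: "m \<le> j \<Longrightarrow> A j \<subseteq> A m" for m j
    using it_dec unfolding A_def X_def by blast
  have Acl: "closed (A j)" for j
  proof -
    have "compact ((\<phi> ^^ j) ` X)" unfolding X_def
      by (rule compact_continuous_image[OF it_cont X_compact[OF cba]])
    then have "closed ((\<phi> ^^ j) ` X)" by (rule fun_compact_imp_closed)
    moreover have "closed {y :: 'a \<Rightarrow> complex. \<eta> \<le> cmod (y h - x0 h)}"
      by (rule closed_Collect_le) (simp_all add: continuous_on_norm continuous_on_diff)
    ultimately show ?thesis unfolding A_def by blast
  qed
  have "X \<inter> (\<Inter>j\<in>UNIV. A j) \<noteq> {}"
  proof (rule compact_imp_fip_image[OF cX])
    fix I' :: "nat set" assume fI: "finite I'" "I' \<subseteq> UNIV"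
    show "X \<inter> (\<Inter>i\<in>I'. A i) \<noteq> {}"
    proof (cases "I' = {}")
      case True then show ?thesis using x0X unfolding X_def by auto
    next
      case False
      define m where "m = Max I'"
      have "A m \<subseteq> X \<inter> (\<Inter>i\<in>I'. A i)"
      proof -
        have "A m \<subseteq> A i" if "i \<in> I'" for i using Adec[of i m] that fI False by (simp add: m_def)
        moreover have "A m \<subseteq> X" unfolding A_def X_def using it_maps by blast
        ultimately show ?thesis by blast
      qed
      then show ?thesis using Ane[of m] by blast
    qed
  qed (use Acl in auto)
  then obtain y where y: "\<And>j. y \<in> A j" by blast
  then have "y \<in> (\<Inter>n. (\<phi> ^^ n) ` max_ideal_space \<iota>)" unfolding A_def X_def by blast
  then have "y = x0" using inter by blast
  moreover have "\<eta> \<le> cmod (y h - x0 h)" using y[of 0] by (simp add: A_def)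
  ultimately show False using eta by simp
qed

end


lemma root_lt_imp_lt:
  fixes a \<delta> :: real
  assumes n: "n \<ge> 1" and d: "0 < \<delta>" "\<delta> \<le> 1" and r: "root n a < \<delta>"
  shows "a < \<delta>"
proof (cases "a \<le> 0")
  case True then show ?thesis using d by simp
next
  case False
  then have a: "a > 0" by simp
  have r0: "0 \<le> root n a" using a n by simp
  have "a = root n a ^ n" using a n by simp
  also have "\<dots> \<le> root n a ^ 1" using r0 r d n by (intro power_decreasing) linarith+
  also have "\<dots> < \<delta>" using r by simp
  finally show ?thesis .
qed

lemma compact_operator_zero:
  fixes \<iota> :: "complex \<Rightarrow> 'a::{comm_ring_1,real_normed_algebra_1,banach}"
  shows "compact_operator \<iota> (\<lambda>_. 0)"
proof -
  have "(0::'a) \<in> ball 0 1" by simp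
  then have "(\<lambda>_::'a. 0::'a) ` ball 0 1 = {0}" by blast
  then show ?thesis
    by (simp add: compact_operator_def clinear_map_def bounded_linear_zero)
qed

lemma bounded_linear_funpow:
  fixes T :: "'a::real_normed_vector \<Rightarrow> 'a"
  assumes "bounded_linear T"
  shows "bounded_linear (T ^^ n)"
proof (induction n)
  case 0
  have e: "T ^^ 0 = (\<lambda>x. x)" by (simp add: id_def)
  show ?case unfolding e by (rule bounded_linear_ident)
next
  case (Suc n)
  have "bounded_linear (\<lambda>x. T ((T ^^ n) x))"
    using bounded_linear_compose[OF assms Suc] .
  then show ?case by (simp add: o_def)
qed


theorem corollary1p4:
  fixes \<iota> :: "complex \<Rightarrow> 'a::{comm_ring_1,real_normed_algebra_1,banach}"
    and T :: "'a \<Rightarrow> 'a"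
    and \<phi> :: "('a \<Rightarrow> complex) \<Rightarrow> ('a \<Rightarrow> complex)"
    and x0 :: "'a \<Rightarrow> complex"
  assumes "cplx_banach_alg \<iota>"
    and "semisimple \<iota>"
    and "connected (max_ideal_space \<iota>)"
    and "unital_endomorphism \<iota> T"
    and "riesz_operator \<iota> T"
    and "induced_by \<iota> T \<phi>"
    and "(\<Inter>n. (\<phi> ^^ n) ` max_ideal_space \<iota>) = {x0}"
    and "\<forall>D. point_derivation \<iota> x0 D \<longrightarrow> D = (\<lambda>_. 0)"
  shows "\<exists>N>0. \<forall>f. (T ^^ N) f = \<iota> (x0 f)"
proof -
  note cba = assms(1) and ss = assms(2) and riesz = assms(5) and ind = assms(6)
    and inter = assms(7) and noder = assms(8)
  define X where "X = max_ideal_space \<iota>"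
  have x0X: "x0 \<in> X" unfolding X_def by (rule x0X[OF cba ind inter])
  obtain K0 where K0: "K0 > 0"
    "\<forall>y\<in>X. onorm (\<lambda>g. y g - x0 g) \<le> K0 * (onorm (\<lambda>g. y g - x0 g))\<^sup>2"
    using dichotomy[OF cba x0X[unfolded X_def] noder] unfolding X_def by blast
  define K1 where "K1 = max K0 1"
  have K1: "K1 \<ge> 1" "K1 \<ge> K0" by (auto simp: K1_def)
  define \<delta> where "\<delta> = 1 / (20 * K1)"
  have d0: "\<delta> > 0" and d1: "\<delta> \<le> 1" and d20: "20 * \<delta> * K1 = 1"
    using K1 by (auto simp: \<delta>_def field_simps)
  have blT: "bounded_linear T" using riesz by (simp add: riesz_operator_def)
  define Sn where "Sn n = {onorm (\<lambda>x. (T ^^ n) x - K x) | K. compact_operator \<iota> K}" for n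
  have lim: "(\<lambda>n. root n (Inf (Sn n))) \<longlonglongrightarrow> 0"
    using riesz by (simp add: riesz_operator_def Sn_def)
  have "eventually (\<lambda>n. root n (Inf (Sn n)) < \<delta>) sequentially"
    using order_tendstoD(2)[OF lim d0] .
  then obtain N0 where N0: "\<And>n. n \<ge> N0 \<Longrightarrow> root n (Inf (Sn n)) < \<delta>"
    by (auto simp: eventually_sequentially)
  define n where "n = max N0 1"
  have n1: "n \<ge> 1" by (simp add: n_def)
  have "root n (Inf (Sn n)) < \<delta>" using N0 by (simp add: n_def)
  then have "Inf (Sn n) < \<delta>" using root_lt_imp_lt[OF n1 d0 d1] by blast
  moreover have "Sn n \<noteq> {}" using compact_operator_zero[of \<iota>] by (auto simp: Sn_def)
  ultimately obtain s where "s \<in> Sn n" "s < \<delta>" using cInf_lessD by blast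
  then obtain K where K: "compact_operator \<iota> K" "onorm (\<lambda>x. (T ^^ n) x - K x) < \<delta>"
    by (auto simp: Sn_def)
  have blK: "bounded_linear K" using K(1) by (simp add: compact_operator_def)
  define E where "E x = (T ^^ n) x - K x" for x
  have blE: "bounded_linear E" unfolding E_def
    using bounded_linear_funpow[OF blT] blK by (rule bounded_linear_sub)
  have Ebd: "norm (E x) \<le> \<delta> * norm x" for x
  proof -
    have "norm (E x) \<le> onorm E * norm x" by (rule onorm[OF blE])
    also have "\<dots> \<le> \<delta> * norm x" using K(2) by (intro mult_right_mono) (auto simp: E_def[abs_def])
    finally show ?thesis .
  qed
  define C where "C = closure (K ` ball 0 1)"
  have cC: "compact C" using K(1) by (simp add: compact_operator_def C_def)
  have "\<exists>k. finite k \<and> k \<subseteq> C \<and> C \<subseteq> (\<Union>x\<in>k. ball x \<delta>)"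
    using seq_compact_imp_totally_bounded[OF compact_imp_seq_compact[OF cC]] d0 by simp
  then obtain F where F: "finite F" "F \<subseteq> C" "C \<subseteq> (\<Union>h\<in>F. ball h \<delta>)"
    by (elim exE conjE)
  have "\<forall>h\<in>F. eventually (\<lambda>j. \<forall>x\<in>X. cmod ((\<phi> ^^ j) x h - x0 h) < \<delta>) sequentially"
  proof
    fix h
    obtain j0 where "\<forall>j\<ge>j0. \<forall>x\<in>max_ideal_space \<iota>. cmod ((\<phi> ^^ j) x h - x0 h) < \<delta>"
      using nest[OF cba ind inter d0] by blast
    then show "eventually (\<lambda>j. \<forall>x\<in>X. cmod ((\<phi> ^^ j) x h - x0 h) < \<delta>) sequentially"
      unfolding X_def eventually_sequentially by blast
  qed
  then have "eventually (\<lambda>j. \<forall>h\<in>F. \<forall>x\<in>X. cmod ((\<phi> ^^ j) x h - x0 h) < \<delta>) sequentially"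
    by (rule eventually_ball_finite[OF F(1)])
  then obtain J where J: "\<forall>j\<ge>J. \<forall>h\<in>F. \<forall>x\<in>X. cmod ((\<phi> ^^ j) x h - x0 h) < \<delta>"
    unfolding eventually_sequentially by blast
  define j where "j = J"
  have j: "cmod ((\<phi> ^^ j) x h - x0 h) < \<delta>" if "h \<in> F" "x \<in> X" for h x
    using J that unfolding j_def by blast
  define N where "N = n + j"
  have L2: "cmod (w g - x0 g) \<le> 2 * norm g" if "w \<in> X" for w g
  proof -
    have "cmod (w g - x0 g) \<le> cmod (w g) + cmod (x0 g)" by (rule norm_triangle_ineq4)
    also have "\<dots> \<le> norm g + norm g"
      using char_bound[OF cba that[unfolded X_def]] char_bound[OF cba x0X[unfolded X_def]]
      by (rule add_mono)
    finally show ?thesis by simp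
  qed
  have main: "(\<phi> ^^ N) x g = x0 g" if xX: "x \<in> X" for x g
  proof -
    define z where "z = (\<phi> ^^ j) x"
    have zX: "z \<in> X" using it_maps[OF cba ind inter] xX by (simp add: z_def X_def)
    define y where "y = (\<phi> ^^ N) x"
    have yz: "y = (\<phi> ^^ n) z" by (simp add: y_def z_def N_def funpow_add)
    have yX: "y \<in> X" using it_maps[OF cba ind inter] zX by (simp add: yz X_def)
    have yf: "y f - x0 f = z ((T ^^ n) f) - x0 ((T ^^ n) f)" for f
      using it_T[OF cba ind inter, of z n f] it_T[OF cba ind inter, of x0 n f]
        it_x0[OF cba ind inter, of n] zX x0X by (simp add: yz X_def)
    have small: "cmod (y f - x0 f) \<le> 5 * \<delta>" if f1: "norm f < 1" for f
    proof -
      have "(T ^^ n) f = K f + E f" by (simp add: E_def)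
      then have "y f - x0 f = (z (K f) - x0 (K f)) + (z (E f) - x0 (E f))"
        using yf[of f] char_add[OF cba zX[unfolded X_def]] char_add[OF cba x0X[unfolded X_def]]
        by simp
      then have "cmod (y f - x0 f) \<le> cmod (z (K f) - x0 (K f)) + cmod (z (E f) - x0 (E f))"
        by (simp add: norm_triangle_ineq)
      moreover have "cmod (z (E f) - x0 (E f)) \<le> 2 * \<delta>"
      proof -
        have "cmod (z (E f) - x0 (E f)) \<le> 2 * norm (E f)" by (rule L2[OF zX])
        also have "\<dots> \<le> 2 * (\<delta> * norm f)" using Ebd[of f] by simp
        also have "\<dots> \<le> 2 * \<delta>" using f1 d0 by (simp add: mult_left_le)
        finally show ?thesis .
      qed
      moreover have "cmod (z (K f) - x0 (K f)) \<le> 3 * \<delta>"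
      proof -
        have "f \<in> ball 0 1" using f1 by simp
        then have "K f \<in> K ` ball 0 1" by (rule imageI)
        then have "K f \<in> C" unfolding C_def by (rule subsetD[OF closure_subset])
        then have "K f \<in> (\<Union>h\<in>F. ball h \<delta>)" using F(3) by (rule subsetD[rotated])
        then obtain h where h1: "h \<in> F" and h2: "K f \<in> ball h \<delta>" by (rule UN_E)
        have h: "h \<in> F" "dist h (K f) < \<delta>" using h1 h2 by (simp_all only: mem_ball)
        have eq: "z (K f) - x0 (K f) = (z h - x0 h) + (z (K f - h) - x0 (K f - h))"
          by (simp add: char_diff[OF cba zX[unfolded X_def]] char_diff[OF cba x0X[unfolded X_def]])
        have "cmod (z h - x0 h) < \<delta>" using j[OF h(1) xX] by (simp add: z_def)
        moreover have "cmod (z (K f - h) - x0 (K f - h)) \<le> 2 * \<delta>"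
        proof -
          have "cmod (z (K f - h) - x0 (K f - h)) \<le> 2 * norm (K f - h)" by (rule L2[OF zX])
          also have "\<dots> \<le> 2 * \<delta>" using h(2) by (simp add: dist_norm norm_minus_commute)
          finally show ?thesis .
        qed
        ultimately show ?thesis unfolding eq by (smt (verit) norm_triangle_ineq)
      qed
      ultimately show ?thesis by simp
    qed
    have onle: "onorm (\<lambda>g. y g - x0 g) \<le> 10 * \<delta>"
    proof (rule onorm_le)
      fix g :: 'a
      show "norm (y g - x0 g) \<le> 10 * \<delta> * norm g"
      proof (cases "g = 0")
        case True then show ?thesis
          by (simp add: char_zero[OF cba yX[unfolded X_def]] char_zero[OF cba x0X[unfolded X_def]])
      next
        case False
        then have ng: "norm g > 0" by simp
        define f where "f = (1 / (2 * norm g)) *\<^sub>R g"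
        have nf: "norm f < 1" using ng by (simp add: f_def)
        have gf: "g = (2 * norm g) *\<^sub>R f" using ng by (simp add: f_def)
        have yg: "y ((2 * norm g) *\<^sub>R f) = (2 * norm g) *\<^sub>R y f"
          by (rule char_scaleR[OF cba yX[unfolded X_def]])
        have xg: "x0 ((2 * norm g) *\<^sub>R f) = (2 * norm g) *\<^sub>R x0 f"
          by (rule char_scaleR[OF cba x0X[unfolded X_def]])
        have "y g - x0 g = (2 * norm g) *\<^sub>R (y f - x0 f)"
          using yg xg unfolding gf[symmetric] by (simp add: scaleR_diff_right)
        then have "norm (y g - x0 g) = (2 * norm g) * cmod (y f - x0 f)" using ng by simp
        also have "\<dots> \<le> (2 * norm g) * (5 * \<delta>)" using small[OF nf] ng by (intro mult_left_mono) auto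
        also have "\<dots> = 10 * \<delta> * norm g" by simp
        finally show ?thesis .
      qed
    qed
    define e where "e = onorm (\<lambda>g. y g - x0 g)"
    have e0: "e \<ge> 0" unfolding e_def
      using char_bounded_linear[OF cba yX[unfolded X_def]] char_bounded_linear[OF cba x0X[unfolded X_def]]
      by (intro onorm_pos_le bounded_linear_sub)
    have eK: "e \<le> K0 * e\<^sup>2" using K0(2) yX by (simp add: e_def)
    have "e = 0"
    proof (rule ccontr)
      assume "e \<noteq> 0"
      then have ep: "e > 0" using e0 by simp
      have "1 \<le> K0 * e" using eK ep by (simp add: power2_eq_square)
      also have "\<dots> \<le> K1 * (10 * \<delta>)"
        using onle K1 K0(1) e0 by (intro mult_mono) (auto simp: e_def)
      also have "\<dots> = 1 / 2" using d20 by (simp add: mult_ac)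
      finally show False by simp
    qed
    have "norm (y g - x0 g) \<le> e * norm g" unfolding e_def
      using char_bounded_linear[OF cba yX[unfolded X_def]] char_bounded_linear[OF cba x0X[unfolded X_def]]
      by (intro onorm bounded_linear_sub)
    then show ?thesis using \<open>e = 0\<close> by (simp add: y_def)
  qed
  show ?thesis
  proof (intro exI[of _ N] conjI allI)
    show "N > 0" using n1 by (simp add: N_def)
  next
    fix f
    have "h ((T ^^ N) f - \<iota> (x0 f)) = 0" if hX: "h \<in> max_ideal_space \<iota>" for h
    proof -
      have "h ((T ^^ N) f) = (\<phi> ^^ N) h f" by (rule it_T[OF cba ind inter hX])
      also have "\<dots> = x0 f" using main hX by (simp add: X_def)
      finally show ?thesis by (simp add: char_diff[OF cba hX] char_iota[OF cba hX])
    qed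
    then have "\<forall>h\<in>max_ideal_space \<iota>. h ((T ^^ N) f - \<iota> (x0 f)) = 0" by blast
    moreover have "\<forall>f. (\<forall>h\<in>max_ideal_space \<iota>. h f = 0) \<longrightarrow> f = 0"
      using ss by (simp only: semisimple_def)
    ultimately have "(T ^^ N) f - \<iota> (x0 f) = 0" by (elim allE impE) (assumption+)
    then show "(T ^^ N) f = \<iota> (x0 f)" by simp
  qed
qed

end
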